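(* Let $\partial D$ be a closed $C^2$ curve in $\mathbb{R}^2$ and let $\mathbf{C}=(C_{ij})_{i,j=1}^3$ be the constant matrix described in the context. Then $\mathbf{C}$ is symmetric.
   Context: Lamé constants $\lambda,\mu$; $\boldsymbol\Gamma(\mathbf{x})=\alpha_1\ln|\mathbf{x}|\mathbf{I}_2-\alpha_2\frac{\mathbf{x}\mathbf{x}^T}{|\mathbf{x}|^2}$, $\alpha_1=\frac1{4\pi}(\frac1\mu+\frac1{2\mu+\lambda})$, $\alpha_2=\frac1{4\pi}(\frac1\mu-\frac1{2\mu+\lambda})$. $\mathbf{S}_{\partial D}[\boldsymbol\varphi](\mathbf{x})=\int_{\partial D}\boldsymbol\Gamma(\mathbf{x}-\mathbf{y})\boldsymbol\varphi(\mathbf{y})ds(\mathbf{y})$; $\mathbf{K}^*_{\partial D}[\boldsymbol\varphi](\mathbf{x})=\mathrm{p.v.}\int_{\partial D}\partial_{\boldsymbol\nu_{\mathbf{x}}}\boldsymbol\Gamma(\mathbf{x}-\mathbf{y})\boldsymbol\varphi(\mathbf{y})ds(\mathbf{y})$ with conormal derivative $\partial_{\boldsymbol\nu}\mathbf{u}=\lambda(\nabla\cdot\mathbf{u})\boldsymbol\nu+\mu(\nabla\mathbf{u}+\nabla\mathbf{u}^T)\boldsymbol\nu$. Let $\boldsymbol\xi_1=(1,0)^T$, $\boldsymbol\xi_2=(0,1)^T$, $\boldsymbol\xi_3=(x_2,-x_1)^T$, $\mathbf{F}=(\boldsymbol\xi_1,\boldsymbol\xi_2,\boldsymbol\xi_3)$.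 It is known that there is a unique $\mathbf{G}=(\boldsymbol\zeta_1,\boldsymbol\zeta_2,\boldsymbol\zeta_3)$, whose columns form a basis of $\ker(-\frac12\mathbf{I}_2+\mathbf{K}^*_{\partial D})$, and a unique constant $3\times3$ matrix $\mathbf{C}$ such that $\mathbf{S}_{\partial D}[\mathbf{G}]=\mathbf{F}\mathbf{C}$ on $\partial D$ and $\int_{\partial D}\mathbf{F}(\mathbf{y})^T\mathbf{G}(\mathbf{y})ds(\mathbf{y})=\mathbf{I}_3$. *)

theory Defs
  imports "HOL-Complex_Analysis.Complex_Analysis"
begin

text \<open>Points and vectors of the plane are represented as complex numbers
  (x1, x2) = x1 + i x2; the Euclidean inner product is the real inner product on complex.\<close>

definition alpha1 :: "real \<Rightarrow> real \<Rightarrow> real" where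
  "alpha1 lam mu = (1 / (4 * pi)) * (1 / mu + 1 / (2 * mu + lam))"

definition alpha2 :: "real \<Rightarrow> real \<Rightarrow> real" where
  "alpha2 lam mu = (1 / (4 * pi)) * (1 / mu - 1 / (2 * mu + lam))"

text \<open>Kelvin matrix applied to a vector v:
  Gamma(x) v = alpha1 ln|x| v - alpha2 (x x^T / |x|^2) v.\<close>
definition Gam :: "real \<Rightarrow> real \<Rightarrow> complex \<Rightarrow> complex \<Rightarrow> complex" where
  "Gam lam mu x v = (alpha1 lam mu * ln (norm x)) *\<^sub>R v
                    - (alpha2 lam mu * ((x \<bullet> v) / (norm x)^2)) *\<^sub>R x"

text \<open>Conormal derivative
  lam (div u) n + mu (grad u + grad u^T) n  of a vector field u at x, with D the Jacobian.\<close>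
definition conormal :: "real \<Rightarrow> real \<Rightarrow> (complex \<Rightarrow> complex) \<Rightarrow> complex \<Rightarrow> complex \<Rightarrow> complex" where
  "conormal lam mu u x n =
     (let D = frechet_derivative u (at x);
          dv = Re (D 1) + Im (D \<i>)
      in (lam * dv) *\<^sub>R n + mu *\<^sub>R (D n + (complex_of_real (D 1 \<bullet> n) + complex_of_real (D \<i> \<bullet> n) * \<i>)))"

text \<open>A closed C^2 regular simple curve, parametrized 1-periodically, positively oriented
  (counterclockwise, so that the rotated tangent below is the outward normal).\<close>
definition C2_closed_curve :: "(real \<Rightarrow> complex) \<Rightarrow> bool" where
  "C2_closed_curve g \<longleftrightarrow>
     (\<forall>t. g (t + 1) = g t) \<and>
     (\<forall>t. g differentiable (at t)) \<and>
     (\<forall>t. (\<lambda>s. vector_derivative g (at s)) differentiable (at t)) \<and>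
     continuous_on UNIV (\<lambda>t. vector_derivative (\<lambda>s. vector_derivative g (at s)) (at t)) \<and>
     (\<forall>t. vector_derivative g (at t) \<noteq> 0) \<and>
     simple_path g \<and>
     (\<exists>z. z \<notin> path_image g \<and> winding_number g z = 1)"

definition speed :: "(real \<Rightarrow> complex) \<Rightarrow> real \<Rightarrow> real" where
  "speed g t = norm (vector_derivative g (at t))"

text \<open>Outward unit normal at g t (tangent rotated clockwise).\<close>
definition nu :: "(real \<Rightarrow> complex) \<Rightarrow> real \<Rightarrow> complex" where
  "nu g t = - \<i> * vector_derivative g (at t) / complex_of_real (speed g t)"

definition single_layer :: "real \<Rightarrow> real \<Rightarrow> (real \<Rightarrow> complex) \<Rightarrow> (complex \<Rightarrow> complex) \<Rightarrow> complex \<Rightarrow> complex" where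
  "single_layer lam mu g phi x =
     integral {0..1} (\<lambda>s. speed g s *\<^sub>R Gam lam mu (x - g s) (phi (g s)))"

text \<open>phi lies in the kernel of -1/2 I + K*: phi is continuous on the boundary and for every
  boundary point x = g t, the principal value integral
  p.v. int d_{nu_x} Gamma(x-y) phi(y) ds(y) exists and equals phi(x)/2.\<close>
definition in_kernel :: "real \<Rightarrow> real \<Rightarrow> (real \<Rightarrow> complex) \<Rightarrow> (complex \<Rightarrow> complex) \<Rightarrow> bool" where
  "in_kernel lam mu g phi \<longleftrightarrow>
     continuous_on (path_image g) phi \<and>
     (\<forall>t\<in>{0..1}.
        ((\<lambda>\<epsilon>. integral {s\<in>{0..1}. \<epsilon> \<le> norm (g s - g t)}
              (\<lambda>s. speed g s *\<^sub>R
                     conormal lam mu (\<lambda>x. Gam lam mu (x - g s) (phi (g s))) (g t) (nu g t)))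
          \<longlongrightarrow> phi (g t) / 2) (at_right 0))"

text \<open>xi_1 = (1,0), xi_2 = (0,1), xi_3 = (x2, -x1).\<close>
definition xi :: "3 \<Rightarrow> complex \<Rightarrow> complex" where
  "xi i x = (if i = 1 then 1 else if i = 2 then \<i> else - \<i> * x)"

end

theory Submission
  imports Defs "HOL-Real_Asymp.Real_Asymp"
begin



lemma negln_has_integral: "((\<lambda>u::real. - ln u) has_integral 1) {0..1}"
proof -
  define F where "F u = u - u * ln u" for u :: real
  have c0: "(F \<longlongrightarrow> F 0) (at_right 0)"
    unfolding F_def by simp real_asymp
  have "continuous_on {0..1} F"
    unfolding continuous_on_def
  proof
    fix x :: real assume x: "x \<in> {0..1}"
    show "(F \<longlongrightarrow> F x) (at x within {0..1})"
    proof (cases "x = 0")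
      case True then show ?thesis using c0 by (simp add: at_within_Icc_at_right)
    next
      case False
      with x have "x > 0" by auto
      then have "isCont F x" unfolding F_def by (intro continuous_intros) auto
      then show ?thesis using continuous_at_imp_continuous_at_within continuous_within by blast
    qed
  qed
  moreover have "(F has_vector_derivative - ln u) (at u)" if "u \<in> {0<..<1}" for u
  proof -
    have "(F has_real_derivative (1 - (1 * ln u + u * (1/u)))) (at u)"
      unfolding F_def using that by (intro derivative_eq_intros) auto
    then show ?thesis using that by (simp add: has_real_derivative_iff_has_vector_derivative)
  qed
  ultimately have "((\<lambda>u. - ln u) has_integral F 1 - F 0) {0..1}"
    by (intro fundamental_theorem_of_calculus_interior) auto
  then show ?thesis by (simp add: F_def)
qed

lemma negln_integrable: "integrable lborel (\<lambda>u::real. indicator {0<..1} u * - ln u)"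
proof -
  have m: "(\<lambda>u::real. indicator {0<..1} u * - ln u) \<in> borel_measurable borel" by measurable
  have nn: "0 \<le> indicator {0<..1} u * - ln u" for u :: real
    by (auto simp: indicator_def)
  have "((\<lambda>u::real. if u \<in> {0..1} then - ln u else 0) has_integral 1) UNIV"
    using negln_has_integral by (simp only: has_integral_restrict_UNIV)
  then have "((\<lambda>u::real. indicator {0<..1} u * - ln u) has_integral 1) UNIV"
    by (rule has_integral_spike[where S="{0}", rotated 2]) (auto simp: indicator_def)
  then have nI: "integral\<^sup>N lborel (\<lambda>u::real. indicator {0<..1} u * - ln u) = ennreal 1"
    using nn_integral_has_integral_lborel[OF m nn] by blast
  show ?thesis
    by (rule integrableI_nn_integral_finite[OF _ _ nI]) (auto intro!: AE_I2 simp: indicator_def)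
qed

definition Lg :: "real \<Rightarrow> real" where "Lg u = indicator {-1..1} u * \<bar>ln \<bar>u\<bar>\<bar>"

lemma Lg_integrable: "integrable lborel Lg"
proof -
  have a: "integrable lborel (\<lambda>u::real. indicator {0<..1} (0 + (-1) * u) * - ln (0 + (-1) * u))"
    using negln_integrable lborel_integrable_real_affine_iff[of "-1" "\<lambda>u::real. indicator {0<..1} u * - ln u" 0] by simp
  have i1: "integrable lborel (\<lambda>u::real. indicator {0<..1} u * - ln u + indicator {0<..1} (0 + (-1) * u) * - ln (0 + (-1) * u))"
    using a negln_integrable by simp
  have ae1: "AE u in lborel. indicator {0<..1} u * - ln u + indicator {0<..1} (0 + (-1) * u) * - ln (0 + (-1) * u) = Lg u"
    using AE_lborel_singleton[of 0]
  proof eventually_elim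
    case (elim u)
    show ?case
    proof (cases "u > 0")
      case True then show ?thesis by (auto simp: Lg_def indicator_def abs_if)
    next
      case False then show ?thesis using elim by (auto simp: Lg_def indicator_def abs_if)
    qed
  qed
  have m1: "Lg \<in> borel_measurable lborel" unfolding Lg_def by measurable
  show ?thesis by (rule integrable_cong_AE_imp[OF i1 m1 ae1])
qed

lemma Lg_nonneg: "0 \<le> Lg u" by (simp add: Lg_def)


lemma near_bound:
  fixes g V :: "real \<Rightarrow> complex"
  assumes der: "\<And>x. (g has_vector_derivative V x) (at x)"
    and Vbig: "\<And>x. x \<in> {-1..2} \<Longrightarrow> 2 * m \<le> norm (V x)"
    and Vuc: "\<And>a b. a \<in> {-1..2} \<Longrightarrow> b \<in> {-1..2} \<Longrightarrow> \<bar>a - b\<bar> < r \<Longrightarrow> norm (V a - V b) < m"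
    and m: "m > 0"
    and ab: "a \<in> {-1..2}" "b \<in> {-1..2}" "\<bar>a - b\<bar> < r"
  shows "m * \<bar>a - b\<bar> \<le> norm (g a - g b)"
proof -
  have main: "m * (y - x) \<le> norm (g y - g x)" if xy: "x \<le> y" "x \<in> {-1..2}" "y \<in> {-1..2}" "y - x < r" for x y
  proof -
    have "(V has_integral (g y - g x)) {x..y}"
      using xy der by (intro fundamental_theorem_of_calculus) (auto intro: has_vector_derivative_at_within)
    moreover have "((\<lambda>z. V x) has_integral (y - x) *\<^sub>R V x) {x..y}"
      using has_integral_const_real[of "V x" x y] xy by simp
    ultimately have hi: "((\<lambda>z. V z - V x) has_integral (g y - g x - (y - x) *\<^sub>R V x)) {x..y}"
      by (rule has_integral_diff)
    have "norm (g y - g x - (y - x) *\<^sub>R V x) \<le> m * Henstock_Kurzweil_Integration.content (cbox x y)"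
    proof (rule has_integral_bound[where f="\<lambda>z. V z - V x"])
      show "0 \<le> m" using m by simp
      show "((\<lambda>z. V z - V x) has_integral (g y - g x - (y - x) *\<^sub>R V x)) (cbox x y)"
        using hi by simp
      fix z assume z: "z \<in> cbox x y"
      then have "z \<in> {-1..2}" "\<bar>z - x\<bar> < r" using xy by auto
      then show "norm (V z - V x) \<le> m" using Vuc[of z x] xy by auto
    qed
    then have b1: "norm (g y - g x - (y - x) *\<^sub>R V x) \<le> m * (y - x)" using xy by simp
    have b2: "norm ((y - x) *\<^sub>R V x) \<ge> 2 * m * (y - x)"
      using Vbig[of x] xy by (simp add: mult.commute mult_left_mono)
    have "norm ((y - x) *\<^sub>R V x) \<le> norm (g y - g x) + norm (g y - g x - (y - x) *\<^sub>R V x)"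
      using norm_triangle_ineq4[of "g y - g x" "g y - g x - (y - x) *\<^sub>R V x"] by simp
    then show ?thesis using b1 b2 by linarith
  qed
  show ?thesis
  proof (cases "a \<le> b")
    case True
    then have "\<bar>a - b\<bar> = b - a" by simp
    then show ?thesis using main[of a b] ab True by (simp add: norm_minus_commute)
  next
    case False
    then show ?thesis using main[of b a] ab by (simp add: abs_if)
  qed
qed

lemma curve_der:
  assumes "C2_closed_curve g"
  shows "(g has_vector_derivative vector_derivative g (at x)) (at x)"
  using assms unfolding C2_closed_curve_def by (simp add: vector_derivative_works[symmetric])

lemma curve_cont: assumes "C2_closed_curve g" shows "continuous_on UNIV g"
  using assms unfolding C2_closed_curve_def
  by (simp add: continuous_at_imp_continuous_on differentiable_imp_continuous_within)

lemma curve_Vcont: assumes "C2_closed_curve g"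
  shows "continuous_on UNIV (\<lambda>t. vector_derivative g (at t))"
  using assms unfolding C2_closed_curve_def
  by (simp add: continuous_at_imp_continuous_on differentiable_imp_continuous_within)

lemma curve_speed_cont: assumes "C2_closed_curve g"
  shows "continuous_on UNIV (speed g)"
  unfolding speed_def using curve_Vcont[OF assms] by (intro continuous_intros)

lemma curve_simple: assumes "C2_closed_curve g" shows "simple_path g"
  using assms unfolding C2_closed_curve_def by simp

lemma curve_per: assumes "C2_closed_curve g" shows "g (t + 1) = g t"
  using assms unfolding C2_closed_curve_def by simp

lemma curve_Vnz: assumes "C2_closed_curve g" shows "vector_derivative g (at t) \<noteq> 0"
  using assms unfolding C2_closed_curve_def by simp


lemma curve_log_bound:
  assumes curve: "C2_closed_curve g"
  shows "\<exists>M\<ge>0. \<forall>s\<in>{0..1}. \<forall>t\<in>{0..1}.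
           \<bar>ln (norm (g s - g t))\<bar> \<le> M + Lg (s - t) + Lg (s - t + 1) + Lg (s - t - 1)"
proof -
  define V where "V t = vector_derivative g (at t)" for t
  have der: "(g has_vector_derivative V x) (at x)" for x
    unfolding V_def by (rule curve_der[OF curve])
  have Vc: "continuous_on UNIV V" unfolding V_def by (rule curve_Vcont[OF curve])
  have gc: "continuous_on UNIV g" by (rule curve_cont[OF curve])
  obtain x0 where x0: "x0 \<in> {-1..2::real}" "\<forall>y\<in>{-1..2}. norm (V x0) \<le> norm (V y)"
  proof -
    have "continuous_on {-1..2::real} (\<lambda>x. norm (V x))"
      by (intro continuous_intros continuous_on_subset[OF Vc]) auto
    then show ?thesis using continuous_attains_inf[of "{-1..2::real}" "\<lambda>x. norm (V x)"] that by auto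
  qed
  define m where "m = norm (V x0) / 2"
  have m: "m > 0" unfolding m_def V_def using curve_Vnz[OF curve] by simp
  have Vbig: "2 * m \<le> norm (V x)" if "x \<in> {-1..2}" for x
    using x0 that unfolding m_def by auto
  have "uniformly_continuous_on {-1..2::real} V"
    by (rule compact_uniformly_continuous) (auto intro: continuous_on_subset[OF Vc])
  then obtain r where r: "r > 0" and Vuc0: "\<And>a b. a \<in> {-1..2} \<Longrightarrow> b \<in> {-1..2} \<Longrightarrow> dist b a < r \<Longrightarrow> dist (V b) (V a) < m"
    unfolding uniformly_continuous_on_def using m by metis
  have Vuc: "norm (V a - V b) < m" if "a \<in> {-1..2}" "b \<in> {-1..2}" "\<bar>a - b\<bar> < r" for a b
    using Vuc0[of b a] that by (simp add: dist_norm)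
  have near: "m * \<bar>a - b\<bar> \<le> norm (g a - g b)" if "a \<in> {-1..2}" "b \<in> {-1..2}" "\<bar>a - b\<bar> < r" for a b
    by (rule near_bound[OF der Vbig Vuc m that])
  define P where "P = {p \<in> {0..1::real} \<times> {0..1::real}. r \<le> \<bar>fst p - snd p\<bar> \<and> \<bar>fst p - snd p\<bar> \<le> 1 - r}"
  have "\<exists>\<delta>>0. \<forall>p\<in>P. \<delta> \<le> norm (g (fst p) - g (snd p))"
  proof (cases "P = {}")
    case True then show ?thesis by (intro exI[of _ 1]) auto
  next
    case False
    have "compact P"
    proof -
      have "closed P" unfolding P_def
        by (intro closed_Collect_conj closed_Times closed_real_atLeastAtMost closed_Collect_le continuous_intros)
          (auto intro: closed_Times)
      moreover have "bounded P" unfolding P_def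
        by (rule bounded_subset[of "{0..1} \<times> {0..1}"]) (auto intro: bounded_Times)
      ultimately show ?thesis by (simp add: compact_eq_bounded_closed)
    qed
    moreover have "continuous_on P (\<lambda>p. norm (g (fst p) - g (snd p)))"
      by (intro continuous_intros continuous_on_compose2[OF gc]) auto
    ultimately obtain p0 where p0: "p0 \<in> P" "\<forall>p\<in>P. norm (g (fst p0) - g (snd p0)) \<le> norm (g (fst p) - g (snd p))"
      using continuous_attains_inf[of P] False by blast
    have "g (fst p0) \<noteq> g (snd p0)"
    proof
      assume eq: "g (fst p0) = g (snd p0)"
      have "loop_free g" using curve_simple[OF curve] by (simp add: simple_path_def)
      then have lf: "\<forall>x\<in>{0..1}. \<forall>y\<in>{0..1}. g x = g y \<longrightarrow> x = y \<or> x = 0 \<and> y = 1 \<or> x = 1 \<and> y = 0"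
        unfolding loop_free_def by simp
      have "fst p0 \<in> {0..1}" "snd p0 \<in> {0..1}" using p0(1) unfolding P_def by auto
      then have "fst p0 = snd p0 \<or> fst p0 = 0 \<and> snd p0 = 1 \<or> fst p0 = 1 \<and> snd p0 = 0"
        using lf eq by blast
      then show False using p0(1) r unfolding P_def by auto
    qed
    then show ?thesis using p0 by (intro exI[of _ "norm (g (fst p0) - g (snd p0))"]) auto
  qed
  then obtain \<delta> where \<delta>: "\<delta> > 0" "\<And>s t. s \<in> {0..1} \<Longrightarrow> t \<in> {0..1} \<Longrightarrow> r \<le> \<bar>s - t\<bar> \<Longrightarrow> \<bar>s - t\<bar> \<le> 1 - r \<Longrightarrow> \<delta> \<le> norm (g s - g t)"
    unfolding P_def by force
  have "bounded (g ` {0..1})"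
    by (rule compact_imp_bounded, rule compact_continuous_image) (auto intro: continuous_on_subset[OF gc])
  then obtain B where B: "B > 0" "\<And>x. x \<in> {0..1} \<Longrightarrow> norm (g x) \<le> B"
    unfolding bounded_pos by auto
  define M where "M = \<bar>ln (2 * B)\<bar> + \<bar>ln m\<bar> + \<bar>ln \<delta>\<bar>"
  have "M \<ge> 0" unfolding M_def by simp
  moreover have "\<bar>ln (norm (g s - g t))\<bar> \<le> M + Lg (s - t) + Lg (s - t + 1) + Lg (s - t - 1)"
    if st: "s \<in> {0..1}" "t \<in> {0..1}" for s t
  proof (cases "g s = g t")
    case True
    then show ?thesis using \<open>M \<ge> 0\<close> Lg_nonneg[of "s - t"] Lg_nonneg[of "s - t + 1"] Lg_nonneg[of "s - t - 1"] by simp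
  next
    case False
    define x where "x = norm (g s - g t)"
    have xpos: "x > 0" using False unfolding x_def by simp
    have "x \<le> norm (g s) + norm (g t)" unfolding x_def by (rule norm_triangle_ineq4)
    also have "\<dots> \<le> 2 * B" using B(2)[OF st(1)] B(2)[OF st(2)] by simp
    finally have "x \<le> 2 * B" .
    then have "ln x \<le> ln (2 * B)" using xpos B(1) by simp
    then have up: "ln x \<le> \<bar>ln (2 * B)\<bar>" by linarith
    have key: "m * \<bar>u\<bar> \<le> x \<Longrightarrow> u \<noteq> 0 \<Longrightarrow> \<bar>u\<bar> \<le> 1 \<Longrightarrow> - ln x \<le> \<bar>ln m\<bar> + Lg u" for u
    proof -
      assume h: "m * \<bar>u\<bar> \<le> x" "u \<noteq> 0" "\<bar>u\<bar> \<le> 1"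
      have "ln (m * \<bar>u\<bar>) \<le> ln x" using h m xpos by simp
      then have "ln m + ln \<bar>u\<bar> \<le> ln x" using h m by (simp add: ln_mult)
      moreover have "Lg u = - ln \<bar>u\<bar>" using h unfolding Lg_def by (simp add: indicator_def abs_le_iff)
      ultimately show ?thesis by linarith
    qed
    have low: "- ln x \<le> \<bar>ln m\<bar> + \<bar>ln \<delta>\<bar> + Lg (s - t) + Lg (s - t + 1) + Lg (s - t - 1)"
    proof -
      have L: "0 \<le> Lg (s - t)" "0 \<le> Lg (s - t + 1)" "0 \<le> Lg (s - t - 1)" "0 \<le> \<bar>ln m\<bar>" "0 \<le> \<bar>ln \<delta>\<bar>"
        by (simp_all add: Lg_nonneg)
      consider "\<bar>s - t\<bar> < r" | "s - t > 1 - r \<and> r \<le> \<bar>s - t\<bar>" | "t - s > 1 - r \<and> r \<le> \<bar>s - t\<bar>" | "r \<le> \<bar>s - t\<bar> \<and> \<bar>s - t\<bar> \<le> 1 - r"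
        by (smt (verit))
      then show ?thesis
      proof cases
        case 1
        have h1: "s \<in> {-1..2}" "t \<in> {-1..2}" using st by auto
        have "m * \<bar>s - t\<bar> \<le> x" unfolding x_def using near[OF h1 1] by simp
        moreover have "s - t \<noteq> 0" using False by auto
        moreover have "\<bar>s - t\<bar> \<le> 1" using st by (smt (verit) atLeastAtMost_iff)
        ultimately have "- ln x \<le> \<bar>ln m\<bar> + Lg (s - t)" using key[of "s - t"] by simp
        then show ?thesis using L by linarith
      next
        case 2
        have "g (t + 1) = g t" by (rule curve_per[OF curve])
        have h1: "s \<in> {-1..2}" "t + 1 \<in> {-1..2}" using st by auto
        have h2: "\<bar>s - (t + 1)\<bar> < r" using 2 st by (smt (verit) atLeastAtMost_iff)
        have "m * \<bar>s - (t + 1)\<bar> \<le> x" unfolding x_def using near[OF h1 h2] \<open>g (t + 1) = g t\<close> by simp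
        moreover have "s - t - 1 \<noteq> 0"
        proof
          assume "s - t - 1 = 0" then have "s = t + 1" by simp
          then show False using False \<open>g (t + 1) = g t\<close> by simp
        qed
        moreover have "\<bar>s - (t + 1)\<bar> = \<bar>s - t - 1\<bar>" by simp
        moreover have "\<bar>s - t - 1\<bar> \<le> 1" using st 2 r by (smt (verit) atLeastAtMost_iff)
        ultimately have "- ln x \<le> \<bar>ln m\<bar> + Lg (s - t - 1)" using key[of "s - t - 1"] by simp
        then show ?thesis using L by linarith
      next
        case 3
        have "g (s + 1) = g s" by (rule curve_per[OF curve])
        have h1: "s + 1 \<in> {-1..2}" "t \<in> {-1..2}" using st by auto
        have h2: "\<bar>(s + 1) - t\<bar> < r" using 3 st by (smt (verit) atLeastAtMost_iff)
        have "m * \<bar>(s + 1) - t\<bar> \<le> x" unfolding x_def using near[OF h1 h2] \<open>g (s + 1) = g s\<close> by simp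
        moreover have "s - t + 1 \<noteq> 0"
        proof
          assume "s - t + 1 = 0" then have "t = s + 1" by simp
          then show False using False \<open>g (s + 1) = g s\<close> by simp
        qed
        moreover have "\<bar>(s + 1) - t\<bar> = \<bar>s - t + 1\<bar>" by simp
        moreover have "\<bar>s - t + 1\<bar> \<le> 1" using st 3 r by (smt (verit) atLeastAtMost_iff)
        ultimately have "- ln x \<le> \<bar>ln m\<bar> + Lg (s - t + 1)" using key[of "s - t + 1"] by simp
        then show ?thesis using L by linarith
      next
        case 4
        have "\<delta> \<le> x" unfolding x_def using \<delta>(2)[OF st] 4 by blast
        then have "ln \<delta> \<le> ln x" using \<delta>(1) by simp
        then show ?thesis using L by linarith
      qed
    qed
    have "0 \<le> \<bar>ln m\<bar>" "0 \<le> \<bar>ln \<delta>\<bar>" "0 \<le> \<bar>ln (2 * B)\<bar>" "0 \<le> Lg (s - t)" "0 \<le> Lg (s - t + 1)" "0 \<le> Lg (s - t - 1)"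
      by (simp_all add: Lg_nonneg)
    then show ?thesis using up low unfolding x_def[symmetric] M_def abs_le_iff by linarith
  qed
  ultimately show ?thesis by blast
qed


definition Zf :: "(real \<Rightarrow> complex) \<Rightarrow> (complex \<Rightarrow> complex) \<Rightarrow> real \<Rightarrow> complex" where
  "Zf g a t = indicator {0..1} t *\<^sub>R a (g t)"

definition Kf :: "real \<Rightarrow> real \<Rightarrow> (real \<Rightarrow> complex) \<Rightarrow> (complex \<Rightarrow> complex) \<Rightarrow> (complex \<Rightarrow> complex) \<Rightarrow> real \<Rightarrow> real \<Rightarrow> real" where
  "Kf lam mu g a b s t = speed g s * speed g t * (Zf g a t \<bullet> Gam lam mu (g t - g s) (Zf g b s))"

lemma Gam_meas[measurable (raw)]:
  assumes [measurable]: "F \<in> borel_measurable M" "G \<in> borel_measurable M"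
  shows "(\<lambda>x. Gam lam mu (F x) (G x)) \<in> borel_measurable M"
  unfolding Gam_def power2_eq_square by measurable

lemma Gam_scaleR: "Gam lam mu x (c *\<^sub>R v) = c *\<^sub>R Gam lam mu x v"
  unfolding Gam_def by (simp add: algebra_simps inner_scaleR_right)

lemma Gam_sym: "u \<bullet> Gam lam mu (p - q) v = v \<bullet> Gam lam mu (q - p) u"
proof -
  have gi: "u \<bullet> Gam lam mu x v = alpha1 lam mu * ln (norm x) * (u \<bullet> v) - alpha2 lam mu * ((x \<bullet> v) * (x \<bullet> u)) / (norm x)^2" for x u v
    unfolding Gam_def by (simp add: inner_diff_right inner_scaleR_right inner_commute)
  have e: "q - p = - (p - q)" by simp
  show ?thesis unfolding gi e norm_minus_cancel inner_minus_left
    by (simp add: inner_commute mult.commute)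
qed

lemma Gam_bound: "norm (Gam lam mu x v) \<le> (\<bar>alpha1 lam mu\<bar> * \<bar>ln (norm x)\<bar> + \<bar>alpha2 lam mu\<bar>) * norm v"
proof -
  have "norm (((x \<bullet> v) / (norm x)^2) *\<^sub>R x) \<le> norm v"
  proof (cases "x = 0")
    case True then show ?thesis by simp
  next
    case False
    have "norm (((x \<bullet> v) / (norm x)^2) *\<^sub>R x) = \<bar>x \<bullet> v\<bar> / norm x"
      using False by (simp add: power2_eq_square)
    also have "\<dots> \<le> norm x * norm v / norm x"
      using Cauchy_Schwarz_ineq2[of x v] False by (intro divide_right_mono) auto
    also have "\<dots> = norm v" using False by simp
    finally show ?thesis .
  qed
  note f1 = this
  have "norm ((alpha2 lam mu * ((x \<bullet> v) / (norm x)^2)) *\<^sub>R x) = \<bar>alpha2 lam mu\<bar> * norm (((x \<bullet> v) / (norm x)^2) *\<^sub>R x)"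
    by (simp only: norm_scaleR abs_mult mult.assoc)
  also have "\<dots> \<le> \<bar>alpha2 lam mu\<bar> * norm v" by (rule mult_left_mono[OF f1]) simp
  finally have "norm ((alpha2 lam mu * ((x \<bullet> v) / (norm x)^2)) *\<^sub>R x) \<le> \<bar>alpha2 lam mu\<bar> * norm v" .
  moreover have "norm ((alpha1 lam mu * ln (norm x)) *\<^sub>R v) = \<bar>alpha1 lam mu\<bar> * \<bar>ln (norm x)\<bar> * norm v"
    by (simp add: abs_mult)
  moreover have "norm (Gam lam mu x v) \<le> norm ((alpha1 lam mu * ln (norm x)) *\<^sub>R v) + norm ((alpha2 lam mu * ((x \<bullet> v) / (norm x)^2)) *\<^sub>R x)"
    unfolding Gam_def by (rule norm_triangle_ineq4)
  ultimately show ?thesis by (simp only: distrib_right)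
qed

lemma Kf_meas:
  assumes [measurable]: "g \<in> borel_measurable borel" "speed g \<in> borel_measurable borel"
     "Zf g a \<in> borel_measurable borel" "Zf g b \<in> borel_measurable borel"
  shows "(\<lambda>p. Kf lam mu g a b (fst p) (snd p)) \<in> borel_measurable (lborel \<Otimes>\<^sub>M lborel)"
  unfolding Kf_def by measurable


lemma Lg_shift_s: "integrable lborel (\<lambda>s. Lg (s - t + k))"
proof -
  have "integrable lborel (\<lambda>x. Lg ((k - t) + 1 * x))"
    by (rule lborel_integrable_real_affine[OF Lg_integrable]) simp
  moreover have "(\<lambda>s. Lg (s - t + k)) = (\<lambda>x. Lg ((k - t) + 1 * x))" by (simp add: fun_eq_iff algebra_simps)
  ultimately show ?thesis by simp
qed

lemma Lg_shift_t: "integrable lborel (\<lambda>t. Lg (s - t + k))"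
proof -
  have "integrable lborel (\<lambda>x. Lg ((s + k) + (-1) * x))"
    by (rule lborel_integrable_real_affine[OF Lg_integrable]) simp
  moreover have "(\<lambda>t. Lg (s - t + k)) = (\<lambda>x. Lg ((s + k) + (-1) * x))" by (simp add: fun_eq_iff algebra_simps)
  ultimately show ?thesis by simp
qed

lemma Lg_shift_t_int: "(\<integral>t. Lg (s - t + k) \<partial>lborel) = (\<integral>x. Lg x \<partial>lborel)"
proof -
  have "(\<integral>x. Lg x \<partial>lborel) = \<bar>-1\<bar> *\<^sub>R (\<integral>x. Lg ((s + k) + (-1) * x) \<partial>lborel)"
    by (rule lborel_integral_real_affine) simp
  moreover have "(\<lambda>t. Lg (s - t + k)) = (\<lambda>x. Lg ((s + k) + (-1) * x))" by (simp add: fun_eq_iff algebra_simps)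
  ultimately show ?thesis by simp
qed



lemma ind_integrable: "integrable lborel (\<lambda>s::real. indicator {0..1} s * (c::real))"
  using borel_integrable_compact[of "{0..1::real}" "\<lambda>_. c"] by simp

lemma Zf_meas:
  assumes curve: "C2_closed_curve g" and a: "continuous_on (path_image g) a"
  shows "Zf g a \<in> borel_measurable borel"
proof -
  have gc: "continuous_on {0..1} g" using curve_cont[OF curve] by (rule continuous_on_subset) simp
  have ca: "continuous_on {0..1} (\<lambda>t. a (g t))"
    by (rule continuous_on_compose2[OF a gc]) (auto simp: path_image_def)
  show "Zf g a \<in> borel_measurable borel"
    unfolding Zf_def by (rule borel_measurable_continuous_on_indicator[OF _ ca]) simp
qed

lemma Zf_bound:
  assumes curve: "C2_closed_curve g" and a: "continuous_on (path_image g) a"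
  shows "\<exists>B\<ge>0. \<forall>t. norm (Zf g a t) \<le> B * indicator {0..1} t"
proof -
  have gc: "continuous_on {0..1} g" using curve_cont[OF curve] by (rule continuous_on_subset) simp
  have ca: "continuous_on {0..1} (\<lambda>t. a (g t))"
    by (rule continuous_on_compose2[OF a gc]) (auto simp: path_image_def)
  have "compact ((\<lambda>t. a (g t)) ` {0..1})" by (rule compact_continuous_image[OF ca]) simp
  then have "bounded ((\<lambda>t. a (g t)) ` {0..1})" by (rule compact_imp_bounded)
  then obtain B where B0: "\<forall>x\<in>(\<lambda>t. a (g t)) ` {0..1}. norm x \<le> B"
    unfolding bounded_iff by blast
  have "norm (Zf g a t) \<le> \<bar>B\<bar> * indicator {0..1} t" for t
  proof (cases "t \<in> {0..1}")
    case True
    then have "norm (a (g t)) \<le> B" using B0 by blast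
    then show ?thesis using True by (simp add: Zf_def)
  next
    case False then show ?thesis by (simp add: Zf_def)
  qed
  then show ?thesis by (intro exI[of _ "\<bar>B\<bar>"]) simp
qed

lemma speed_bound:
  assumes curve: "C2_closed_curve g"
  shows "\<exists>S\<ge>0. \<forall>t\<in>{0..1}. speed g t \<le> S" 
proof -
  have c: "continuous_on UNIV (speed g)" by (rule curve_speed_cont[OF curve])
  have "compact (speed g ` {0..1})"
    by (rule compact_continuous_image) (rule continuous_on_subset[OF c], simp_all)
  then have "bounded (speed g ` {0..1})" by (rule compact_imp_bounded)
  then obtain B where B0: "\<forall>x\<in>speed g ` {0..1}. norm x \<le> B"
    unfolding bounded_iff by blast
  then show "\<exists>S\<ge>0. \<forall>t\<in>{0..1}. speed g t \<le> S" 
    by (intro exI[of _ "\<bar>B\<bar>"]) auto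
qed

lemma speed_meas: assumes curve: "C2_closed_curve g" shows "speed g \<in> borel_measurable borel"
  by (rule borel_measurable_continuous_onI[OF curve_speed_cont[OF curve]])

lemma speed_nonneg: "0 \<le> speed g t" by (simp add: speed_def)

lemma g_meas: assumes "C2_closed_curve g" shows "g \<in> borel_measurable borel"
  by (rule borel_measurable_continuous_onI[OF curve_cont[OF assms]])



lemma Gam_zero: "Gam lam mu x 0 = 0" unfolding Gam_def by simp

lemma Kf_bound:
  assumes curve: "C2_closed_curve g" and a: "continuous_on (path_image g) a" and b: "continuous_on (path_image g) b"
  shows "\<exists>A\<ge>0. \<exists>Bc\<ge>0. \<forall>s t. \<bar>Kf lam mu g a b s t\<bar> \<le> indicator {0..1} s * (A * indicator {0..1} t + Bc * (Lg (s - t) + Lg (s - t + 1) + Lg (s - t - 1)))"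
proof -
  obtain M where M: "M \<ge> 0" "\<And>s t. s \<in> {0..1} \<Longrightarrow> t \<in> {0..1} \<Longrightarrow> \<bar>ln (norm (g s - g t))\<bar> \<le> M + Lg (s - t) + Lg (s - t + 1) + Lg (s - t - 1)"
    using curve_log_bound[OF curve] by blast
  obtain S where S: "S \<ge> 0" "\<And>t. t \<in> {0..1} \<Longrightarrow> speed g t \<le> S" using speed_bound[OF curve] by blast
  obtain Ba where Ba: "Ba \<ge> 0" "\<And>t. norm (Zf g a t) \<le> Ba * indicator {0..1} t" using Zf_bound[OF curve a] by blast
  obtain Bb where Bb: "Bb \<ge> 0" "\<And>t. norm (Zf g b t) \<le> Bb * indicator {0..1} t" using Zf_bound[OF curve b] by blast
  define a1 where "a1 = \<bar>alpha1 lam mu\<bar>"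
  define a2 where "a2 = \<bar>alpha2 lam mu\<bar>"
  have a12: "a1 \<ge> 0" "a2 \<ge> 0" unfolding a1_def a2_def by simp_all
  define A where "A = S * S * Ba * Bb * (a1 * M + a2)"
  define Bc where "Bc = S * S * Ba * Bb * a1"
  have "\<bar>Kf lam mu g a b s t\<bar> \<le> indicator {0..1} s * (A * indicator {0..1} t + Bc * (Lg (s - t) + Lg (s - t + 1) + Lg (s - t - 1)))" for s t
  proof (cases "s \<in> {0..1} \<and> t \<in> {0..1}")
    case False
    then have "Zf g a t = 0 \<or> Zf g b s = 0" by (auto simp: Zf_def)
    then have "Kf lam mu g a b s t = 0" unfolding Kf_def by (auto simp: Gam_zero)
    moreover have "0 \<le> indicator {0..1} s * (A * indicator {0..1} t + Bc * (Lg (s - t) + Lg (s - t + 1) + Lg (s - t - 1)))"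
      unfolding A_def Bc_def using S Ba Bb M a12 by (intro mult_nonneg_nonneg add_nonneg_nonneg) (simp_all add: Lg_nonneg)
    ultimately show ?thesis by simp
  next
    case True
    then have st: "s \<in> {0..1}" "t \<in> {0..1}" by auto
    define L where "L = Lg (s - t) + Lg (s - t + 1) + Lg (s - t - 1)"
    have L0: "L \<ge> 0" unfolding L_def by (simp add: Lg_nonneg)
    have lnb: "\<bar>ln (norm (g t - g s))\<bar> \<le> M + L"
      using M(2)[OF st] unfolding L_def by (simp add: norm_minus_commute)
    have nZa: "norm (Zf g a t) \<le> Ba" using Ba(2)[of t] st by simp
    have nZb: "norm (Zf g b s) \<le> Bb" using Bb(2)[of s] st by simp
    have nG: "norm (Gam lam mu (g t - g s) (Zf g b s)) \<le> (a1 * (M + L) + a2) * Bb"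
    proof -
      have "norm (Gam lam mu (g t - g s) (Zf g b s)) \<le> (a1 * \<bar>ln (norm (g t - g s))\<bar> + a2) * norm (Zf g b s)"
        unfolding a1_def a2_def by (rule Gam_bound)
      also have "\<dots> \<le> (a1 * (M + L) + a2) * Bb"
        using lnb nZb a12 by (intro mult_mono add_mono mult_left_mono) (simp_all add: M L0)
      finally show ?thesis .
    qed
    have ip: "\<bar>Zf g a t \<bullet> Gam lam mu (g t - g s) (Zf g b s)\<bar> \<le> Ba * ((a1 * (M + L) + a2) * Bb)"
    proof -
      have "\<bar>Zf g a t \<bullet> Gam lam mu (g t - g s) (Zf g b s)\<bar> \<le> norm (Zf g a t) * norm (Gam lam mu (g t - g s) (Zf g b s))"
        by (rule Cauchy_Schwarz_ineq2)
      also have "\<dots> \<le> Ba * ((a1 * (M + L) + a2) * Bb)"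
        using nZa nG Ba(1) by (intro mult_mono) simp_all
      finally show ?thesis .
    qed
    have sp: "speed g s * speed g t \<le> S * S"
      using S(2)[OF st(1)] S(2)[OF st(2)] S(1) by (intro mult_mono) (simp_all add: speed_nonneg)
    have "\<bar>Kf lam mu g a b s t\<bar> = speed g s * speed g t * \<bar>Zf g a t \<bullet> Gam lam mu (g t - g s) (Zf g b s)\<bar>"
      unfolding Kf_def by (simp add: abs_mult speed_nonneg)
    also have "\<dots> \<le> S * S * (Ba * ((a1 * (M + L) + a2) * Bb))"
      by (rule mult_mono[OF sp ip]) (simp_all add: S(1))
    also have "\<dots> = A + Bc * L" unfolding A_def Bc_def by (simp add: algebra_simps)
    finally show ?thesis using st unfolding L_def by simp
  qed
  moreover have "A \<ge> 0" "Bc \<ge> 0" unfolding A_def Bc_def using S Ba Bb M a12 by simp_all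
  ultimately show ?thesis by blast
qed


definition Hf :: "real \<Rightarrow> real \<Rightarrow> (real \<Rightarrow> complex) \<Rightarrow> (complex \<Rightarrow> complex) \<Rightarrow> real \<Rightarrow> real \<Rightarrow> complex" where
  "Hf lam mu g b t s = speed g s *\<^sub>R Gam lam mu (g t - g s) (Zf g b s)"

lemma Kf_Hf: "Kf lam mu g a b s t = speed g t * (Zf g a t \<bullet> Hf lam mu g b t s)"
  unfolding Kf_def Hf_def by (simp add: inner_scaleR_right mult_ac)

lemma Lg3_t_integrable: "integrable lborel (\<lambda>t. Lg (s - t) + Lg (s - t + 1) + Lg (s - t - 1))"
  using Lg_shift_t[of s 0] Lg_shift_t[of s 1] Lg_shift_t[of s "-1"] by simp

lemma Lg3_s_integrable: "integrable lborel (\<lambda>s. Lg (s - t) + Lg (s - t + 1) + Lg (s - t - 1))"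
  using Lg_shift_s[of t 0] Lg_shift_s[of t 1] Lg_shift_s[of t "-1"] by simp

lemma Lg3_t_integral: "(\<integral>t. Lg (s - t) + Lg (s - t + 1) + Lg (s - t - 1) \<partial>lborel) = 3 * (\<integral>x. Lg x \<partial>lborel)"
proof -
  have "(\<integral>t. Lg (s - t) + Lg (s - t + 1) + Lg (s - t - 1) \<partial>lborel)
     = (\<integral>t. Lg (s - t + 0) \<partial>lborel) + (\<integral>t. Lg (s - t + 1) \<partial>lborel) + (\<integral>t. Lg (s - t + -1) \<partial>lborel)"
    using Lg_shift_t[of s 0] Lg_shift_t[of s 1] Lg_shift_t[of s "-1"] by simp
  also have "\<dots> = 3 * (\<integral>x. Lg x \<partial>lborel)" unfolding Lg_shift_t_int by simp
  finally show ?thesis .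
qed

lemma Dt_integrable: "integrable lborel (\<lambda>t. indicator {0..1} s * ((A::real) * indicator {0..1} t + Bc * (Lg (s - t) + Lg (s - t + 1) + Lg (s - t - 1))))"
proof -
  have i2: "integrable lborel (indicator {0..1} :: real \<Rightarrow> real)" using ind_integrable[of 1] by simp
  show ?thesis
    by (intro integrable_mult_right Bochner_Integration.integrable_add Lg3_t_integrable i2)
qed

lemma Dt_integral: "(\<integral>t. indicator {0..1} s * ((A::real) * indicator {0..1} t + Bc * (Lg (s - t) + Lg (s - t + 1) + Lg (s - t - 1))) \<partial>lborel)
   = indicator {0..1} s * (A + Bc * (3 * (\<integral>x. Lg x \<partial>lborel)))"
proof -
  have i0: "integrable lborel (\<lambda>t::real. indicator {0..1} t * A)" by (rule ind_integrable)
  have i2: "integrable lborel (indicator {0..1} :: real \<Rightarrow> real)" using ind_integrable[of 1] by simp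
  have i1: "integrable lborel (\<lambda>t::real. A * indicator {0..1} t)" using i2 by (intro integrable_mult_right) simp
  have i2: "integrable lborel (\<lambda>t. Bc * (Lg (s - t) + Lg (s - t + 1) + Lg (s - t - 1)))" using Lg3_t_integrable[of s] by simp
  have "(\<integral>t. indicator {0..1} s * (A * indicator {0..1} t + Bc * (Lg (s - t) + Lg (s - t + 1) + Lg (s - t - 1))) \<partial>lborel)
     = indicator {0..1} s * ((\<integral>t. A * indicator {0..1::real} t \<partial>lborel) + (\<integral>t. Bc * (Lg (s - t) + Lg (s - t + 1) + Lg (s - t - 1)) \<partial>lborel))"
    using i1 i2 by simp
  also have "\<dots> = indicator {0..1} s * (A + Bc * (3 * (\<integral>x. Lg x \<partial>lborel)))"
    by (simp add: Lg3_t_integral content_real)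
  finally show ?thesis .
qed

lemma Ds_integrable: "integrable lborel (\<lambda>s. indicator {0..1} s * ((A::real) + Bc * (Lg (s - t) + Lg (s - t + 1) + Lg (s - t - 1))))"
proof -
  have i0: "integrable lborel (\<lambda>s::real. indicator {0..1} s * A)" by (rule ind_integrable)
  have i1: "integrable lborel (\<lambda>s. indicator {0..1} s *\<^sub>R (Bc * (Lg (s - t) + Lg (s - t + 1) + Lg (s - t - 1))))"
    by (rule integrable_mult_indicator) (use Lg3_s_integrable[of t] in simp_all)
  have "integrable lborel (\<lambda>s. indicator {0..1} s * A + indicator {0..1} s *\<^sub>R (Bc * (Lg (s - t) + Lg (s - t + 1) + Lg (s - t - 1))))"
    by (rule Bochner_Integration.integrable_add[OF i0 i1])
  then show ?thesis by (simp add: distrib_left)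
qed



lemma Hf_bound:
  assumes curve: "C2_closed_curve g" and b: "continuous_on (path_image g) b"
  shows "\<exists>A\<ge>0. \<exists>Bc\<ge>0. \<forall>t\<in>{0..1}. \<forall>s. norm (Hf lam mu g b t s) \<le> indicator {0..1} s * (A + Bc * (Lg (s - t) + Lg (s - t + 1) + Lg (s - t - 1)))"
proof -
  obtain M where M: "M \<ge> 0" "\<And>s t. s \<in> {0..1} \<Longrightarrow> t \<in> {0..1} \<Longrightarrow> \<bar>ln (norm (g s - g t))\<bar> \<le> M + Lg (s - t) + Lg (s - t + 1) + Lg (s - t - 1)"
    using curve_log_bound[OF curve] by blast
  obtain S where S: "S \<ge> 0" "\<And>t. t \<in> {0..1} \<Longrightarrow> speed g t \<le> S" using speed_bound[OF curve] by blast
  obtain Bb where Bb: "Bb \<ge> 0" "\<And>t. norm (Zf g b t) \<le> Bb * indicator {0..1} t" using Zf_bound[OF curve b] by blast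
  define a1 where "a1 = \<bar>alpha1 lam mu\<bar>"
  define a2 where "a2 = \<bar>alpha2 lam mu\<bar>"
  have a12: "a1 \<ge> 0" "a2 \<ge> 0" unfolding a1_def a2_def by simp_all
  define A where "A = S * Bb * (a1 * M + a2)"
  define Bc where "Bc = S * Bb * a1"
  have "norm (Hf lam mu g b t s) \<le> indicator {0..1} s * (A + Bc * (Lg (s - t) + Lg (s - t + 1) + Lg (s - t - 1)))"
    if t: "t \<in> {0..1}" for s t
  proof (cases "s \<in> {0..1}")
    case False
    then have "Zf g b s = 0" by (auto simp: Zf_def)
    then show ?thesis using False unfolding Hf_def by (simp add: Gam_zero)
  next
    case True
    define L where "L = Lg (s - t) + Lg (s - t + 1) + Lg (s - t - 1)"
    have L0: "L \<ge> 0" unfolding L_def by (simp add: Lg_nonneg)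
    have lnb: "\<bar>ln (norm (g t - g s))\<bar> \<le> M + L"
      using M(2)[OF True t] unfolding L_def by (simp add: norm_minus_commute)
    have nZb: "norm (Zf g b s) \<le> Bb" using Bb(2)[of s] True by simp
    have nG: "norm (Gam lam mu (g t - g s) (Zf g b s)) \<le> (a1 * (M + L) + a2) * Bb"
    proof -
      have "norm (Gam lam mu (g t - g s) (Zf g b s)) \<le> (a1 * \<bar>ln (norm (g t - g s))\<bar> + a2) * norm (Zf g b s)"
        unfolding a1_def a2_def by (rule Gam_bound)
      also have "\<dots> \<le> (a1 * (M + L) + a2) * Bb"
        using lnb nZb a12 by (intro mult_mono add_mono mult_left_mono) (simp_all add: M L0)
      finally show ?thesis .
    qed
    have "norm (Hf lam mu g b t s) = speed g s * norm (Gam lam mu (g t - g s) (Zf g b s))"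
      unfolding Hf_def by (simp add: speed_nonneg)
    also have "\<dots> \<le> S * ((a1 * (M + L) + a2) * Bb)"
      by (rule mult_mono[OF S(2)[OF True] nG]) (simp_all add: S(1))
    also have "\<dots> = A + Bc * L" unfolding A_def Bc_def by (simp add: algebra_simps)
    finally show ?thesis using True unfolding L_def by simp
  qed
  moreover have "A \<ge> 0" "Bc \<ge> 0" unfolding A_def Bc_def using S Bb M a12 by simp_all
  ultimately show ?thesis by blast
qed

lemma Hf_meas:
  assumes curve: "C2_closed_curve g" and b: "continuous_on (path_image g) b"
  shows "Hf lam mu g b t \<in> borel_measurable lborel"
proof -
  note [measurable] = g_meas[OF curve] speed_meas[OF curve] Zf_meas[OF curve b]
  show ?thesis unfolding Hf_def by measurable
qed

lemma Hf_integrable: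
  assumes curve: "C2_closed_curve g" and b: "continuous_on (path_image g) b" and t: "t \<in> {0..1}"
  shows "integrable lborel (Hf lam mu g b t)"
proof -
  obtain A Bc where AB: "A \<ge> 0" "Bc \<ge> 0" "\<forall>t\<in>{0..1}. \<forall>s. norm (Hf lam mu g b t s) \<le> indicator {0..1} s * (A + Bc * (Lg (s - t) + Lg (s - t + 1) + Lg (s - t - 1)))"
    using Hf_bound[OF curve b, of lam mu] by blast
  show ?thesis
  proof (rule Bochner_Integration.integrable_bound[OF Ds_integrable[of A Bc t] Hf_meas[OF curve b]])
    show "AE s in lborel. norm (Hf lam mu g b t s) \<le> norm (indicator {0..1} s * (A + Bc * (Lg (s - t) + Lg (s - t + 1) + Lg (s - t - 1))))"
    proof (intro AE_I2)
      fix s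
      have "0 \<le> indicator {0..1} s * (A + Bc * (Lg (s - t) + Lg (s - t + 1) + Lg (s - t - 1)))"
        using AB by (intro mult_nonneg_nonneg add_nonneg_nonneg) (simp_all add: Lg_nonneg)
      moreover have "norm (Hf lam mu g b t s) \<le> indicator {0..1} s * (A + Bc * (Lg (s - t) + Lg (s - t + 1) + Lg (s - t - 1)))"
        using AB(3) t by blast
      ultimately show "norm (Hf lam mu g b t s) \<le> norm (indicator {0..1} s * (A + Bc * (Lg (s - t) + Lg (s - t + 1) + Lg (s - t - 1))))"
        by simp
    qed
  qed
qed



lemma Kf_meas2:
  assumes curve: "C2_closed_curve g" and a: "continuous_on (path_image g) a" and b: "continuous_on (path_image g) b"
  shows "case_prod (Kf lam mu g a b) \<in> borel_measurable (lborel \<Otimes>\<^sub>M lborel)"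
proof -
  have "case_prod (Kf lam mu g a b) = (\<lambda>p. Kf lam mu g a b (fst p) (snd p))" by (simp add: fun_eq_iff split_beta)
  then show ?thesis using Kf_meas[OF g_meas[OF curve] speed_meas[OF curve] Zf_meas[OF curve a] Zf_meas[OF curve b]] by simp
qed

lemma Kf_meas_t:
  assumes curve: "C2_closed_curve g" and a: "continuous_on (path_image g) a" and b: "continuous_on (path_image g) b"
  shows "(\<lambda>t. Kf lam mu g a b s t) \<in> borel_measurable lborel"
proof -
  note [measurable] = g_meas[OF curve] speed_meas[OF curve] Zf_meas[OF curve a] Zf_meas[OF curve b]
  show ?thesis unfolding Kf_def by measurable
qed

lemma Kf_int_t:
  assumes curve: "C2_closed_curve g" and a: "continuous_on (path_image g) a" and b: "continuous_on (path_image g) b"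
  shows "integrable lborel (\<lambda>t. Kf lam mu g a b s t)"
proof -
  obtain A Bc where AB: "A \<ge> 0" "Bc \<ge> 0" "\<And>s t. \<bar>Kf lam mu g a b s t\<bar> \<le> indicator {0..1} s * (A * indicator {0..1} t + Bc * (Lg (s - t) + Lg (s - t + 1) + Lg (s - t - 1)))"
    using Kf_bound[OF curve a b, of lam mu] by blast
  show ?thesis
  proof (rule Bochner_Integration.integrable_bound[OF Dt_integrable[of s A Bc] Kf_meas_t[OF curve a b]])
    show "AE t in lborel. norm (Kf lam mu g a b s t) \<le> norm (indicator {0..1} s * (A * indicator {0..1} t + Bc * (Lg (s - t) + Lg (s - t + 1) + Lg (s - t - 1))))"
    proof (intro AE_I2)
      fix t
      have "0 \<le> indicator {0..1} s * (A * indicator {0..1} t + Bc * (Lg (s - t) + Lg (s - t + 1) + Lg (s - t - 1)))"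
        using AB by (intro mult_nonneg_nonneg add_nonneg_nonneg) (simp_all add: Lg_nonneg)
      then show "norm (Kf lam mu g a b s t) \<le> norm (indicator {0..1} s * (A * indicator {0..1} t + Bc * (Lg (s - t) + Lg (s - t + 1) + Lg (s - t - 1))))"
        using AB(3)[of s t] by simp
    qed
  qed
qed

lemma Kf_prod_int:
  assumes curve: "C2_closed_curve g" and a: "continuous_on (path_image g) a" and b: "continuous_on (path_image g) b"
  shows "integrable (lborel \<Otimes>\<^sub>M lborel) (case_prod (Kf lam mu g a b))"
proof -
  obtain A Bc where AB: "A \<ge> 0" "Bc \<ge> 0" "\<And>s t. \<bar>Kf lam mu g a b s t\<bar> \<le> indicator {0..1} s * (A * indicator {0..1} t + Bc * (Lg (s - t) + Lg (s - t + 1) + Lg (s - t - 1)))"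
    using Kf_bound[OF curve a b, of lam mu] by blast
  define C0 where "C0 = A + Bc * (3 * (\<integral>x. Lg x \<partial>lborel))"
  have IL: "0 \<le> (\<integral>x. Lg x \<partial>lborel)" by (rule integral_nonneg_AE) (simp add: Lg_nonneg)
  have C0: "C0 \<ge> 0" unfolding C0_def using AB IL by simp
  have m[measurable]: "case_prod (Kf lam mu g a b) \<in> borel_measurable (lborel \<Otimes>\<^sub>M lborel)"
    by (rule Kf_meas2[OF curve a b])
  show ?thesis
  proof (rule lborel_pair.Fubini_integrable[OF m])
    show "AE s in lborel. integrable lborel (\<lambda>t. case_prod (Kf lam mu g a b) (s, t))"
      using Kf_int_t[OF curve a b] by simp
    show "integrable lborel (\<lambda>s. \<integral>t. norm (case_prod (Kf lam mu g a b) (s, t)) \<partial>lborel)"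
    proof (rule Bochner_Integration.integrable_bound[OF ind_integrable[of C0]])
      show "(\<lambda>s. \<integral>t. norm (case_prod (Kf lam mu g a b) (s, t)) \<partial>lborel) \<in> borel_measurable lborel"
        by measurable
      show "AE s in lborel. norm (\<integral>t. norm (case_prod (Kf lam mu g a b) (s, t)) \<partial>lborel) \<le> norm (indicator {0..1} s * C0)"
      proof (intro AE_I2)
        fix s
        have "(\<integral>t. norm (Kf lam mu g a b s t) \<partial>lborel) \<le> (\<integral>t. indicator {0..1} s * (A * indicator {0..1} t + Bc * (Lg (s - t) + Lg (s - t + 1) + Lg (s - t - 1))) \<partial>lborel)"
          by (rule integral_mono[OF _ Dt_integrable]) (use Kf_int_t[OF curve a b] AB(3) in auto)
        also have "\<dots> = indicator {0..1} s * C0" unfolding C0_def by (rule Dt_integral)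
        finally have "(\<integral>t. norm (Kf lam mu g a b s t) \<partial>lborel) \<le> indicator {0..1} s * C0" .
        moreover have "0 \<le> (\<integral>t. norm (Kf lam mu g a b s t) \<partial>lborel)" by (rule integral_nonneg_AE) simp
        moreover have "0 \<le> indicator {0..1} s * C0" using C0 by simp
        ultimately show "norm (\<integral>t. norm (case_prod (Kf lam mu g a b) (s, t)) \<partial>lborel) \<le> norm (indicator {0..1} s * C0)"
          by simp
      qed
    qed
  qed
qed



lemma HK_lborel:
  fixes f :: "real \<Rightarrow> 'b::euclidean_space"
  assumes "integrable lborel (\<lambda>x. indicator S x *\<^sub>R f x)"
  shows "integral S f = (\<integral>x. indicator S x *\<^sub>R f x \<partial>lborel)"
proof -
  have "integral UNIV (\<lambda>x. indicator S x *\<^sub>R f x) = (\<integral>x. indicator S x *\<^sub>R f x \<partial>lborel)"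
    by (rule integral_lborel[OF assms])
  moreover have "integral UNIV (\<lambda>x. indicator S x *\<^sub>R f x) = integral S f"
    unfolding indicator_scaleR_eq_if by (rule integral_restrict_UNIV)
  ultimately show ?thesis by simp
qed

lemma Kf_swap: "Kf lam mu g a b s t = Kf lam mu g b a t s"
  unfolding Kf_def by (simp add: Gam_sym[of "Zf g a t" lam mu "g t" "g s" "Zf g b s"] mult_ac)

lemma xi_cont: "continuous_on UNIV (xi k)"
proof -
  have "xi k = (if k = 1 then (\<lambda>_. 1) else if k = 2 then (\<lambda>_. \<i>) else (\<lambda>x. - \<i> * x))"
    by (auto simp: xi_def fun_eq_iff)
  then show ?thesis by (simp add: continuous_intros)
qed


theorem lemma2p8:
  fixes lam mu :: real and g :: "real \<Rightarrow> complex"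
    and zeta :: "3 \<Rightarrow> complex \<Rightarrow> complex" and C :: "real^3^3"
  assumes mu_pos: "mu > 0" and lam_mu: "lam + mu > 0"
    and curve: "C2_closed_curve g"
    and ker: "\<forall>j. in_kernel lam mu g (zeta j)"
    and indep: "\<forall>c :: 3 \<Rightarrow> real.
                  (\<forall>x\<in>path_image g. (\<Sum>j\<in>UNIV. c j *\<^sub>R zeta j x) = 0) \<longrightarrow> (\<forall>j. c j = 0)"
    and span: "\<forall>phi. in_kernel lam mu g phi \<longrightarrow>
                  (\<exists>c :: 3 \<Rightarrow> real. \<forall>x\<in>path_image g. phi x = (\<Sum>j\<in>UNIV. c j *\<^sub>R zeta j x))"
    and SG: "\<forall>j. \<forall>x\<in>path_image g.
               single_layer lam mu g (zeta j) x = (\<Sum>i\<in>UNIV. (C $ i $ j) *\<^sub>R xi i x)"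
    and normalization: "\<forall>i j. integral {0..1} (\<lambda>s. speed g s * (xi i (g s) \<bullet> zeta j (g s)))
                          = (if i = j then 1 else 0)"
  shows "transpose C = C"
proof -
  have zc: "continuous_on (path_image g) (zeta j)" for j
    using ker unfolding in_kernel_def by blast
  have gc: "continuous_on {0..1} g" using curve_cont[OF curve] by (rule continuous_on_subset) simp
  have zgc: "continuous_on {0..1} (\<lambda>t. zeta j (g t))" for j
    by (rule continuous_on_compose2[OF zc gc]) (auto simp: path_image_def)
  have spc: "continuous_on {0..1} (speed g)"
    using curve_speed_cont[OF curve] by (rule continuous_on_subset) simp
  have xgc: "continuous_on {0..1} (\<lambda>t. xi k (g t))" for k
    by (rule continuous_on_compose2[OF xi_cont gc]) simp
  have nrm: "(\<integral>t. speed g t * (Zf g (zeta i) t \<bullet> xi k (g t)) \<partial>lborel) = (if k = i then 1 else 0)" for k i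
  proof -
    have eqf: "(\<lambda>t. speed g t * (Zf g (zeta i) t \<bullet> xi k (g t))) = (\<lambda>t. indicator {0..1} t *\<^sub>R (speed g t * (xi k (g t) \<bullet> zeta i (g t))))"
      by (simp add: fun_eq_iff Zf_def inner_commute)
    have int: "integrable lborel (\<lambda>t. indicator {0..1} t *\<^sub>R (speed g t * (xi k (g t) \<bullet> zeta i (g t))))"
      by (rule borel_integrable_compact) (auto intro!: continuous_intros spc xgc zgc)
    show ?thesis unfolding eqf using HK_lborel[OF int] normalization by simp
  qed
  have nrm_int: "integrable lborel (\<lambda>t. speed g t * (Zf g (zeta i) t \<bullet> xi k (g t)))" for k i
  proof -
    have eqf: "(\<lambda>t. speed g t * (Zf g (zeta i) t \<bullet> xi k (g t))) = (\<lambda>t. indicator {0..1} t *\<^sub>R (speed g t * (xi k (g t) \<bullet> zeta i (g t))))"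
      by (simp add: fun_eq_iff Zf_def inner_commute)
    show ?thesis unfolding eqf
      by (rule borel_integrable_compact) (auto intro!: continuous_intros spc xgc zgc)
  qed
  have inner_eq: "speed g t * (Zf g (zeta i) t \<bullet> (\<Sum>k\<in>UNIV. (C $ k $ j) *\<^sub>R xi k (g t)))
        = (\<integral>s. Kf lam mu g (zeta i) (zeta j) s t \<partial>lborel)" for i j t
  proof (cases "t \<in> {0..1}")
    case False
    then have "Zf g (zeta i) t = 0" by (simp add: Zf_def)
    then show ?thesis unfolding Kf_def by simp
  next
    case True
    have "g t \<in> path_image g" using True by (simp add: path_image_def)
    then have sg: "single_layer lam mu g (zeta j) (g t) = (\<Sum>k\<in>UNIV. (C $ k $ j) *\<^sub>R xi k (g t))"
      using SG by blast
    have hf: "(\<lambda>s. indicator {0..1} s *\<^sub>R (speed g s *\<^sub>R Gam lam mu (g t - g s) (zeta j (g s)))) = Hf lam mu g (zeta j) t"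
      by (simp add: fun_eq_iff Hf_def Zf_def Gam_scaleR)
    have hi: "integrable lborel (Hf lam mu g (zeta j) t)" by (rule Hf_integrable[OF curve zc True])
    have "single_layer lam mu g (zeta j) (g t) = (\<integral>s. Hf lam mu g (zeta j) t s \<partial>lborel)"
      unfolding single_layer_def using HK_lborel[of "{0..1}" "\<lambda>s. speed g s *\<^sub>R Gam lam mu (g t - g s) (zeta j (g s))"] hi hf
      by simp
    then have "speed g t * (Zf g (zeta i) t \<bullet> (\<Sum>k\<in>UNIV. (C $ k $ j) *\<^sub>R xi k (g t)))
        = speed g t * (Zf g (zeta i) t \<bullet> (\<integral>s. Hf lam mu g (zeta j) t s \<partial>lborel))"
      using sg by simp
    also have "\<dots> = (\<integral>s. speed g t * (Zf g (zeta i) t \<bullet> Hf lam mu g (zeta j) t s) \<partial>lborel)"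
      using hi by simp
    also have "\<dots> = (\<integral>s. Kf lam mu g (zeta i) (zeta j) s t \<partial>lborel)"
      by (simp add: Kf_Hf)
    finally show ?thesis .
  qed
  have key: "C $ i $ j = (\<integral>t. (\<integral>s. Kf lam mu g (zeta i) (zeta j) s t \<partial>lborel) \<partial>lborel)" for i j
  proof -
    have "(\<integral>t. (\<integral>s. Kf lam mu g (zeta i) (zeta j) s t \<partial>lborel) \<partial>lborel)
        = (\<integral>t. speed g t * (Zf g (zeta i) t \<bullet> (\<Sum>k\<in>UNIV. (C $ k $ j) *\<^sub>R xi k (g t))) \<partial>lborel)"
      by (simp add: inner_eq)
    also have "\<dots> = (\<integral>t. (\<Sum>k\<in>UNIV. C $ k $ j * (speed g t * (Zf g (zeta i) t \<bullet> xi k (g t)))) \<partial>lborel)"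
      by (simp add: inner_sum_right sum_distrib_left mult_ac)
    also have "\<dots> = (\<Sum>k\<in>UNIV. C $ k $ j * (\<integral>t. speed g t * (Zf g (zeta i) t \<bullet> xi k (g t)) \<partial>lborel))"
      using nrm_int by (simp add: integral_sum)
    also have "\<dots> = (\<Sum>k\<in>UNIV. C $ k $ j * (if k = i then 1 else 0))"
      by (simp add: nrm)
    also have "\<dots> = (\<Sum>k\<in>UNIV. if k = i then C $ k $ j else 0)" by (rule sum.cong) auto
    also have "\<dots> = C $ i $ j" by simp
    finally show ?thesis by simp
  qed
  have sym: "C $ j $ i = C $ i $ j" for i j
  proof -
    have "C $ i $ j = (\<integral>t. (\<integral>s. Kf lam mu g (zeta i) (zeta j) s t \<partial>lborel) \<partial>lborel)" by (rule key)
    also have "\<dots> = (\<integral>s. (\<integral>t. Kf lam mu g (zeta i) (zeta j) s t \<partial>lborel) \<partial>lborel)"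
      by (rule lborel_pair.Fubini_integral[OF Kf_prod_int[OF curve zc zc]])
    also have "\<dots> = (\<integral>s. (\<integral>t. Kf lam mu g (zeta j) (zeta i) t s \<partial>lborel) \<partial>lborel)"
      by (subst Kf_swap) (rule refl)
    also have "\<dots> = C $ j $ i" by (rule key[symmetric])
    finally show ?thesis by simp
  qed
  show ?thesis by (simp add: vec_eq_iff transpose_def sym)
qed

end
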